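(* Let $q\ge2$ be even and $d\ge q$. Let $f$ be a density on $\mathbb{R}^d$ with mode $\boldsymbol\theta$, sufficiently smooth, whose $(q+1)$-st order term of the Taylor expansion around $\boldsymbol\theta$ is of the form $\mathbf a^\top(\mathbf x-\boldsymbol\theta)\prod_{i=1}^{q/2}\frac12(\mathbf x-\boldsymbol\theta)^\top\mathrm R_i(\mathbf x-\boldsymbol\theta)$, where $\mathbf a\ne\mathbf 0$ and $\mathrm R_1,\ldots,\mathrm R_{q/2}$ are positive definite. Then the asymptotic bias cannot be made equal to zero by any choice of $\mathrm Q$, i.e. $\nabla(\nabla^\top\mathrm Q\nabla)^{q/2}f(\boldsymbol\theta)\ne\mathbf 0$ for every symmetric positive definite $\mathrm Q$.
   Context: Setting: $\mathrm A=\{Hf(\boldsymbol\theta)\}^{-1}$ is assumed to exist. For a radial $q$-th order kernel $K(\mathbf x)=G(\|\mathbf x\|)$ and a $d\times d$ matrix $\mathrm P$ with $|\det\mathrm P|=1$, the elliptic kernel is $K_{\mathrm P}(\mathbf x)=K(\mathrm P\mathbf x)$ and $\mathrm Q=\mathrm P^{-1}\mathrm P^{-\top}$ (symmetric positive definite). The asymptotic bias of the kernel mode estimator with kernel $K_{\mathrm P}$ is $-\frac{\pi^{d/2}h_n^q}{2^{q-1}\Gamma(\frac{d+q}{2})\Gamma(\frac q2+1)}B_{d,q}(G)\,\mathrm A\,\nabla(\nabla^\top\mathrm Q\nabla)^{q/2}f(\boldsymbol\theta)$ with $B_{d,q}(G)\neq0$, so it vanishes iff $\nabla(\nabla^\top\mathrm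 Q\nabla)^{q/2}f(\boldsymbol\theta)=\mathbf 0$. *)

theory Defs
  imports "HOL-Analysis.Analysis"
begin

definition partial :: "'n::finite \<Rightarrow> (real^'n \<Rightarrow> real) \<Rightarrow> real^'n \<Rightarrow> real" where
  "partial i g x = deriv (\<lambda>t. g (x + t *\<^sub>R axis i 1)) 0"

definition iter_partial :: "'n::finite list \<Rightarrow> (real^'n \<Rightarrow> real) \<Rightarrow> real^'n \<Rightarrow> real" where
  "iter_partial is g = foldr partial is g"

definition C_k :: "nat \<Rightarrow> (real^'n::finite \<Rightarrow> real) \<Rightarrow> bool" where
  "C_k k g \<longleftrightarrow>
     (\<forall>is. length is \<le> k \<longrightarrow> continuous_on UNIV (iter_partial is g)) \<and>
     (\<forall>is. length is < k \<longrightarrow>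
        (\<forall>i x. (\<lambda>t. iter_partial is g (x + t *\<^sub>R axis i 1)) differentiable (at 0)))"

definition pos_def_mat :: "real^'n^'n \<Rightarrow> bool" where
  "pos_def_mat M \<longleftrightarrow> transpose M = M \<and> (\<forall>y. y \<noteq> 0 \<longrightarrow> y \<bullet> (M *v y) > 0)"

definition taylor_term :: "nat \<Rightarrow> (real^'n::finite \<Rightarrow> real) \<Rightarrow> real^'n \<Rightarrow> real^'n \<Rightarrow> real" where
  "taylor_term k g th y = (deriv ^^ k) (\<lambda>t. g (th + t *\<^sub>R y)) 0 / fact k"

definition quad_op :: "real^'n^'n \<Rightarrow> (real^'n::finite \<Rightarrow> real) \<Rightarrow> real^'n \<Rightarrow> real" where
  "quad_op Q g x = (\<Sum>i\<in>UNIV. \<Sum>j\<in>UNIV. Q $ i $ j * partial i (partial j g) x)"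

definition grad :: "(real^'n::finite \<Rightarrow> real) \<Rightarrow> real^'n \<Rightarrow> real^'n" where
  "grad g x = (\<chi> k. partial k g x)"

definition hessian :: "(real^'n::finite \<Rightarrow> real) \<Rightarrow> real^'n \<Rightarrow> real^'n^'n" where
  "hessian g x = (\<chi> i j. partial i (partial j g) x)"

end

theory Submission
  imports Defs "HOL-Probability.Probability"
begin


lemma iter_partial_Nil[simp]: "iter_partial [] g = g" by (simp add: iter_partial_def)
lemma iter_partial_Cons[simp]: "iter_partial (i#is) g = partial i (iter_partial is g)"
  by (simp add: iter_partial_def)
lemma iter_partial_append: "iter_partial (xs @ ys) g = foldr partial xs (iter_partial ys g)"
  by (simp add: iter_partial_def)

lemma line_DERIV:
  fixes G :: "real^'n::finite \<Rightarrow> real"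
  assumes "\<forall>x. (\<lambda>t. G (x + t *\<^sub>R e)) differentiable (at 0)"
  shows "((\<lambda>t. G (x + t *\<^sub>R e)) has_real_derivative deriv (\<lambda>s. G ((x + t0 *\<^sub>R e) + s *\<^sub>R e)) 0) (at t0)"
proof -
  have "((\<lambda>s. G ((x + t0 *\<^sub>R e) + s *\<^sub>R e)) has_real_derivative deriv (\<lambda>s. G ((x + t0 *\<^sub>R e) + s *\<^sub>R e)) 0) (at 0)"
    using assms DERIV_deriv_iff_real_differentiable by blast
  moreover have "(\<lambda>s. G ((x + t0 *\<^sub>R e) + s *\<^sub>R e)) = (\<lambda>s. (\<lambda>t. G (x + t *\<^sub>R e)) (s + t0))"
    by (auto simp: algebra_simps)
  ultimately show ?thesis using DERIV_shift[of "\<lambda>t. G (x + t *\<^sub>R e)" _ 0 t0] by simp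
qed

lemma axis_DERIV:
  fixes G :: "real^'n::finite \<Rightarrow> real"
  assumes "\<forall>x. (\<lambda>t. G (x + t *\<^sub>R axis i 1)) differentiable (at 0)"
  shows "((\<lambda>t. G (x + t *\<^sub>R axis i 1)) has_real_derivative partial i G (x + t0 *\<^sub>R axis i 1)) (at t0)"
  using line_DERIV[OF assms, of x t0] unfolding partial_def .

lemma mvt_abs:
  fixes \<phi> :: "real \<Rightarrow> real"
  assumes "\<And>t. (\<phi> has_real_derivative \<phi>' t) (at t)"
  shows "\<exists>\<xi>. \<bar>\<xi>\<bar> \<le> \<bar>b\<bar> \<and> \<phi> b - \<phi> 0 = b * \<phi>' \<xi>"
proof (cases "b > 0")
  case True
  then obtain z where "z > 0" "z < b" "\<phi> b - \<phi> 0 = (b - 0) * \<phi>' z"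
    using MVT2[of 0 b \<phi> \<phi>'] assms by blast
  then show ?thesis by (intro exI[of _ z]) auto
next
  case False
  show ?thesis
  proof (cases "b = 0")
    case True then show ?thesis by (intro exI[of _ 0]) auto
  next
    case False
    with \<open>\<not> b > 0\<close> have "b < 0" by simp
    then obtain z where "z > b" "z < 0" "\<phi> 0 - \<phi> b = (0 - b) * \<phi>' z"
      using MVT2[of b 0 \<phi> \<phi>'] assms by blast
    then show ?thesis by (intro exI[of _ z]) (auto simp: algebra_simps)
  qed
qed

lemma norm_le_componentwise:
  fixes x y :: "real^'n::finite"
  assumes "\<And>i. \<bar>x $ i\<bar> \<le> \<bar>y $ i\<bar>"
  shows "norm x \<le> norm y"
  unfolding norm_vec_def by (rule L2_set_mono) (use assms in auto)

lemma frechet_from_partials: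
  fixes G :: "real^'n::finite \<Rightarrow> real"
  assumes pd: "\<And>i. \<forall>x. (\<lambda>t. G (x + t *\<^sub>R axis i 1)) differentiable (at 0)"
    and pc: "\<And>i. continuous_on UNIV (partial i G)"
  shows "(G has_derivative (\<lambda>h. h \<bullet> grad G p)) (at p)"
proof -
  have dG: "\<And>i x t. ((\<lambda>s. G (x + s *\<^sub>R axis i 1)) has_real_derivative partial i G (x + t *\<^sub>R axis i 1)) (at t)"
    using axis_DERIV pd by blast
  have cg: "continuous_on UNIV (grad G)"
    unfolding grad_def by (intro continuous_on_vec_lambda pc)
  show ?thesis unfolding has_derivative_at_alt
  proof (intro conjI allI impI)
    show "bounded_linear (\<lambda>h. h \<bullet> grad G p)" by (rule bounded_linear_inner_left)
    fix e :: real assume e: "e > 0"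
    define e' where "e' = e / real CARD('n)"
    have e': "e' > 0" using e by (simp add: e'_def)
    obtain d where d: "d > 0" "\<And>z. dist z p < d \<Longrightarrow> dist (grad G z) (grad G p) < e'"
      using cg e' unfolding continuous_on_iff by (metis UNIV_I)
    have pbound: "\<bar>partial i G z - partial i G p\<bar> \<le> e'" if "norm (z - p) < d" for i z
    proof -
      have "norm (grad G z - grad G p) < e'" using d that by (simp add: dist_norm)
      moreover have "\<bar>(grad G z - grad G p) $ i\<bar> \<le> norm (grad G z - grad G p)"
        by (rule component_le_norm_cart)
      ultimately show ?thesis by (simp add: grad_def)
    qed
    have B: "\<forall>h. (\<forall>i. i \<notin> S \<longrightarrow> h $ i = 0) \<longrightarrow> norm h < d \<longrightarrow>
       \<bar>G (p + h) - G p - (\<Sum>i\<in>S. h $ i * partial i G p)\<bar> \<le> e' * (\<Sum>i\<in>S. \<bar>h $ i\<bar>)"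
      if "finite S" for S
      using that
    proof (induction S)
      case empty
      show ?case
      proof (intro allI impI)
        fix h :: "real^'n" assume "\<forall>i. i \<notin> {} \<longrightarrow> h $ i = 0"
        then have "h = 0" by (auto simp: vec_eq_iff)
        then show "\<bar>G (p + h) - G p - (\<Sum>i\<in>{}. h $ i * partial i G p)\<bar> \<le> e' * (\<Sum>i\<in>{}. \<bar>h $ i\<bar>)"
          by simp
      qed
    next
      case (insert k S)
      show ?case
      proof (intro allI impI)
        fix h :: "real^'n" assume hs: "\<forall>i. i \<notin> insert k S \<longrightarrow> h $ i = 0" and hn: "norm h < d"
        define h' where "h' = (\<chi> i. if i = k then 0 else h $ i)"
        have h'S: "\<forall>i. i \<notin> S \<longrightarrow> h' $ i = 0" using hs by (auto simp: h'_def)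
        have nh': "norm h' \<le> norm h" by (rule norm_le_componentwise) (auto simp: h'_def)
        have IH: "\<bar>G (p + h') - G p - (\<Sum>i\<in>S. h' $ i * partial i G p)\<bar> \<le> e' * (\<Sum>i\<in>S. \<bar>h' $ i\<bar>)"
          using insert.IH h'S nh' hn by auto
        have hh': "h = h' + (h $ k) *\<^sub>R axis k 1" by (auto simp: vec_eq_iff h'_def axis_def)
        obtain \<xi> where xi: "\<bar>\<xi>\<bar> \<le> \<bar>h $ k\<bar>"
          "G (p + h' + (h$k) *\<^sub>R axis k 1) - G (p + h' + 0 *\<^sub>R axis k 1) = h $ k * partial k G (p + h' + \<xi> *\<^sub>R axis k 1)"
          using mvt_abs[of "\<lambda>s. G (p + h' + s *\<^sub>R axis k 1)" "\<lambda>t. partial k G (p + h' + t *\<^sub>R axis k 1)" "h $ k"] dG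
          by blast
        have "norm (h' + \<xi> *\<^sub>R axis k 1) \<le> norm h"
          by (rule norm_le_componentwise) (use xi(1) in \<open>auto simp: h'_def axis_def\<close>)
        then have pk: "\<bar>partial k G (p + h' + \<xi> *\<^sub>R axis k 1) - partial k G p\<bar> \<le> e'"
          using pbound[of "p + h' + \<xi> *\<^sub>R axis k 1" k] hn by (simp add: algebra_simps)
        have e1: "\<bar>G (p + h) - G (p + h') - h $ k * partial k G p\<bar> \<le> e' * \<bar>h $ k\<bar>"
        proof -
          have pe: "G (p + h) = G (p + h' + (h$k) *\<^sub>R axis k 1)" using hh' by (metis add.assoc)
          have d1: "G (p + h) - G (p + h') = h $ k * partial k G (p + h' + \<xi> *\<^sub>R axis k 1)"
            using xi(2) pe by simp
          have "G (p + h) - G (p + h') - h $ k * partial k G p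
              = h $ k * (partial k G (p + h' + \<xi> *\<^sub>R axis k 1) - partial k G p)"
            using d1 by (simp add: right_diff_distrib)
          also have "\<bar>\<dots>\<bar> \<le> \<bar>h $ k\<bar> * e'"
            unfolding abs_mult by (rule mult_left_mono[OF pk]) simp
          finally show ?thesis by (simp add: mult.commute)
        qed
        have sS: "(\<Sum>i\<in>S. h' $ i * partial i G p) = (\<Sum>i\<in>S. h $ i * partial i G p)"
             "(\<Sum>i\<in>S. \<bar>h' $ i\<bar>) = (\<Sum>i\<in>S. \<bar>h $ i\<bar>)"
          using insert.hyps by (auto simp: h'_def intro!: sum.cong)
        show "\<bar>G (p + h) - G p - (\<Sum>i\<in>insert k S. h $ i * partial i G p)\<bar> \<le> e' * (\<Sum>i\<in>insert k S. \<bar>h $ i\<bar>)"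
          using IH e1 insert.hyps unfolding sS by (simp add: algebra_simps)
      qed
    qed
    show "\<exists>d>0. \<forall>y. norm (y - p) < d \<longrightarrow> norm (G y - G p - (y - p) \<bullet> grad G p) \<le> e * norm (y - p)"
    proof (intro exI[of _ d] conjI allI impI)
      show "d > 0" by fact
      fix y assume y: "norm (y - p) < d"
      have "\<bar>G (p + (y - p)) - G p - (\<Sum>i\<in>UNIV. (y - p) $ i * partial i G p)\<bar> \<le> e' * (\<Sum>i\<in>UNIV. \<bar>(y - p) $ i\<bar>)"
        using B[of UNIV] y by auto
      moreover have "(\<Sum>i\<in>UNIV. \<bar>(y - p) $ i\<bar>) \<le> (\<Sum>i\<in>(UNIV::'n set). norm (y - p))"
        by (intro sum_mono component_le_norm_cart)
      moreover have "(y - p) \<bullet> grad G p = (\<Sum>i\<in>UNIV. (y - p) $ i * partial i G p)"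
        by (simp add: inner_vec_def grad_def)
      moreover have "(\<Sum>i\<in>(UNIV::'n set). norm (y - p)) = real CARD('n) * norm (y - p)"
        by simp
      ultimately have "\<bar>G y - G p - (y - p) \<bullet> grad G p\<bar> \<le> e' * (real CARD('n) * norm (y - p))"
        using e' by (metis (no_types, lifting) add.commute diff_add_cancel mult_left_mono order_trans less_imp_le)
      then have "norm (G y - G p - (y - p) \<bullet> grad G p) \<le> e' * (real CARD('n) * norm (y - p))"
        by simp
      then show "norm (G y - G p - (y - p) \<bullet> grad G p) \<le> e * norm (y - p)"
        by (simp add: e'_def)
    qed
  qed
qed

lemma line_DERIV_grad:
  fixes G :: "real^'n::finite \<Rightarrow> real"
  assumes pd: "\<And>i. \<forall>x. (\<lambda>t. G (x + t *\<^sub>R axis i 1)) differentiable (at 0)"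
    and pc: "\<And>i. continuous_on UNIV (partial i G)"
  shows "((\<lambda>s. G (p + s *\<^sub>R y)) has_real_derivative (y \<bullet> grad G (p + s0 *\<^sub>R y))) (at s0)"
proof -
  have "((\<lambda>s. p + s *\<^sub>R y) has_derivative (\<lambda>s. s *\<^sub>R y)) (at s0)"
    by (auto intro!: derivative_eq_intros)
  from has_derivative_compose[OF this frechet_from_partials[OF pd pc, of "p + s0 *\<^sub>R y"]]
  have "((\<lambda>s. G (p + s *\<^sub>R y)) has_derivative (\<lambda>s. (s *\<^sub>R y) \<bullet> grad G (p + s0 *\<^sub>R y))) (at s0)"
    by (simp add: o_def)
  then show ?thesis unfolding has_field_derivative_def
    by (rule has_derivative_eq_rhs) (auto simp: fun_eq_iff)
qed



lemma schwarz_delta: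
  fixes G :: "real^'n::finite \<Rightarrow> real"
  assumes d1: "\<forall>x. (\<lambda>t. G (x + t *\<^sub>R axis i 1)) differentiable (at 0)"
    and d2: "\<forall>x. (\<lambda>t. partial i G (x + t *\<^sub>R axis j 1)) differentiable (at 0)"
    and h: "h > 0"
  shows "\<exists>\<xi> \<eta>. 0 < \<xi> \<and> \<xi> < h \<and> 0 < \<eta> \<and> \<eta> < h \<and>
     G (x + h *\<^sub>R axis i 1 + h *\<^sub>R axis j 1) - G (x + h *\<^sub>R axis i 1) - G (x + h *\<^sub>R axis j 1) + G x
     = h * h * partial j (partial i G) (x + \<xi> *\<^sub>R axis i 1 + \<eta> *\<^sub>R axis j 1)"
proof -
  define \<phi> where "\<phi> t = G ((x + h *\<^sub>R axis j 1) + t *\<^sub>R axis i 1) - G (x + t *\<^sub>R axis i 1)" for t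
  have "(\<phi> has_real_derivative partial i G ((x + h *\<^sub>R axis j 1) + t *\<^sub>R axis i 1) - partial i G (x + t *\<^sub>R axis i 1)) (at t)" for t
    unfolding \<phi>_def by (intro DERIV_diff axis_DERIV d1)
  then obtain \<xi> where xi: "0 < \<xi>" "\<xi> < h" "\<phi> h - \<phi> 0 = (h - 0) * (partial i G ((x + h *\<^sub>R axis j 1) + \<xi> *\<^sub>R axis i 1) - partial i G (x + \<xi> *\<^sub>R axis i 1))"
    using MVT2[of 0 h \<phi> "\<lambda>t. partial i G ((x + h *\<^sub>R axis j 1) + t *\<^sub>R axis i 1) - partial i G (x + t *\<^sub>R axis i 1)"] h by blast
  have "((\<lambda>s. partial i G ((x + \<xi> *\<^sub>R axis i 1) + s *\<^sub>R axis j 1)) has_real_derivative partial j (partial i G) ((x + \<xi> *\<^sub>R axis i 1) + s *\<^sub>R axis j 1)) (at s)" for s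
    by (intro axis_DERIV d2)
  then obtain \<eta> where eta: "0 < \<eta>" "\<eta> < h" "partial i G ((x + \<xi> *\<^sub>R axis i 1) + h *\<^sub>R axis j 1) - partial i G ((x + \<xi> *\<^sub>R axis i 1) + 0 *\<^sub>R axis j 1) = (h - 0) * partial j (partial i G) ((x + \<xi> *\<^sub>R axis i 1) + \<eta> *\<^sub>R axis j 1)"
    using MVT2[of 0 h "\<lambda>s. partial i G ((x + \<xi> *\<^sub>R axis i 1) + s *\<^sub>R axis j 1)" "\<lambda>s. partial j (partial i G) ((x + \<xi> *\<^sub>R axis i 1) + s *\<^sub>R axis j 1)"] h by blast
  have e1: "G (x + h *\<^sub>R axis i 1 + h *\<^sub>R axis j 1) - G (x + h *\<^sub>R axis i 1) - G (x + h *\<^sub>R axis j 1) + G x = \<phi> h - \<phi> 0"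
    unfolding \<phi>_def by (simp add: algebra_simps)
  have e2: "partial i G ((x + h *\<^sub>R axis j 1) + \<xi> *\<^sub>R axis i 1) - partial i G (x + \<xi> *\<^sub>R axis i 1)
     = h * partial j (partial i G) (x + \<xi> *\<^sub>R axis i 1 + \<eta> *\<^sub>R axis j 1)"
    using eta(3) by (simp add: algebra_simps)
  show ?thesis
    apply (rule exI[of _ \<xi>], rule exI[of _ \<eta>])
    using xi eta e1 e2 by simp
qed

lemma dist_two_axis:
  fixes x :: "real^'n::finite"
  assumes "0 < a" "a < h" "0 < b" "b < h"
  shows "dist (x + a *\<^sub>R axis i 1 + b *\<^sub>R axis j 1) x < 2 * h"
proof -
  have "(x + a *\<^sub>R axis i 1 + b *\<^sub>R axis j 1) - x = a *\<^sub>R axis i (1::real) + b *\<^sub>R axis j 1"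
    by simp
  then have "dist (x + a *\<^sub>R axis i 1 + b *\<^sub>R axis j 1) x = norm (a *\<^sub>R axis i (1::real) + b *\<^sub>R axis j 1)"
    by (simp only: dist_norm)
  also have "\<dots> \<le> norm (a *\<^sub>R axis i (1::real)) + norm (b *\<^sub>R axis j (1::real))"
    by (rule norm_triangle_ineq)
  also have "\<dots> = a + b" using assms by simp
  finally show ?thesis using assms by simp
qed

lemma schwarz:
  fixes G :: "real^'n::finite \<Rightarrow> real"
  assumes di: "\<forall>x. (\<lambda>t. G (x + t *\<^sub>R axis i 1)) differentiable (at 0)"
    and dj: "\<forall>x. (\<lambda>t. G (x + t *\<^sub>R axis j 1)) differentiable (at 0)"
    and dij: "\<forall>x. (\<lambda>t. partial i G (x + t *\<^sub>R axis j 1)) differentiable (at 0)"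
    and dji: "\<forall>x. (\<lambda>t. partial j G (x + t *\<^sub>R axis i 1)) differentiable (at 0)"
    and cij: "continuous_on UNIV (partial j (partial i G))"
    and cji: "continuous_on UNIV (partial i (partial j G))"
  shows "partial i (partial j G) x = partial j (partial i G) x"
proof (rule ccontr)
  let ?A = "partial j (partial i G) x" and ?B = "partial i (partial j G) x"
  assume ne: "?B \<noteq> ?A"
  define e where "e = \<bar>?A - ?B\<bar> / 2"
  have e: "e > 0" using ne by (simp add: e_def)
  obtain d1 where d1: "d1 > 0" "\<And>z. dist z x < d1 \<Longrightarrow> dist (partial j (partial i G) z) ?A < e"
    using cij e unfolding continuous_on_iff by (metis UNIV_I)
  obtain d2 where d2: "d2 > 0" "\<And>z. dist z x < d2 \<Longrightarrow> dist (partial i (partial j G) z) ?B < e"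
    using cji e unfolding continuous_on_iff by (metis UNIV_I)
  define h where "h = min d1 d2 / 4"
  have h: "h > 0" "2 * h < d1" "2 * h < d2" using d1 d2 by (auto simp: h_def)
  obtain \<xi> \<eta> where A: "0 < \<xi>" "\<xi> < h" "0 < \<eta>" "\<eta> < h"
    "G (x + h *\<^sub>R axis i 1 + h *\<^sub>R axis j 1) - G (x + h *\<^sub>R axis i 1) - G (x + h *\<^sub>R axis j 1) + G x
     = h * h * partial j (partial i G) (x + \<xi> *\<^sub>R axis i 1 + \<eta> *\<^sub>R axis j 1)"
    using schwarz_delta[OF di dij h(1), of x] by blast
  obtain \<xi>' \<eta>' where B: "0 < \<xi>'" "\<xi>' < h" "0 < \<eta>'" "\<eta>' < h"
    "G (x + h *\<^sub>R axis j 1 + h *\<^sub>R axis i 1) - G (x + h *\<^sub>R axis j 1) - G (x + h *\<^sub>R axis i 1) + G x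
     = h * h * partial i (partial j G) (x + \<xi>' *\<^sub>R axis j 1 + \<eta>' *\<^sub>R axis i 1)"
    using schwarz_delta[OF dj dji h(1), of x] by blast
  have eqx: "x + h *\<^sub>R axis j 1 + h *\<^sub>R axis i 1 = x + h *\<^sub>R axis i 1 + h *\<^sub>R axis j (1::real)"
    by (simp add: algebra_simps)
  have "h * h * partial j (partial i G) (x + \<xi> *\<^sub>R axis i 1 + \<eta> *\<^sub>R axis j 1)
     = h * h * partial i (partial j G) (x + \<xi>' *\<^sub>R axis j 1 + \<eta>' *\<^sub>R axis i 1)"
    using A(5) B(5) unfolding eqx by linarith
  then have eq: "partial j (partial i G) (x + \<xi> *\<^sub>R axis i 1 + \<eta> *\<^sub>R axis j 1)
     = partial i (partial j G) (x + \<xi>' *\<^sub>R axis j 1 + \<eta>' *\<^sub>R axis i 1)"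
    using h(1) by simp
  have "dist (x + \<xi> *\<^sub>R axis i 1 + \<eta> *\<^sub>R axis j 1) x < d1"
    using dist_two_axis[OF A(1-4), of x i j] h(2) by linarith
  then have "dist (partial j (partial i G) (x + \<xi> *\<^sub>R axis i 1 + \<eta> *\<^sub>R axis j 1)) ?A < e"
    by (rule d1(2))
  moreover have "dist (x + \<xi>' *\<^sub>R axis j 1 + \<eta>' *\<^sub>R axis i 1) x < d2"
    using dist_two_axis[OF B(1-4), of x j i] h(3) by linarith
  then have "dist (partial i (partial j G) (x + \<xi>' *\<^sub>R axis j 1 + \<eta>' *\<^sub>R axis i 1)) ?B < e"
    by (rule d2(2))
  ultimately have "\<bar>?A - ?B\<bar> < 2 * e" using eq by (simp add: dist_real_def)
  then show False by (simp add: e_def)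
qed



definition LL :: "nat \<Rightarrow> 'a list set" where "LL k = {xs. length xs = k}"

lemma finite_LL[simp]: "finite (LL k :: 'a::finite list set)"
  using finite_lists_length_eq[of "UNIV::'a set" k] by (simp add: LL_def)

lemma LL_0[simp]: "LL 0 = {[]}" by (auto simp: LL_def)

lemma sum_LL_Suc:
  "(\<Sum>xs\<in>LL (Suc k). F xs) = (\<Sum>i\<in>(UNIV::'a::finite set). \<Sum>xs\<in>LL k. F (i#xs))"
proof -
  have e: "LL (Suc k) = (\<lambda>(i,xs). i#xs) ` (UNIV \<times> (LL k :: 'a list set))"
    by (auto simp: LL_def length_Suc_conv image_iff)
  have "inj_on (\<lambda>(i,xs). i#xs) (UNIV \<times> (LL k :: 'a list set))" by (auto simp: inj_on_def)
  then have "(\<Sum>xs\<in>LL (Suc k). F xs) = (\<Sum>(i,xs)\<in>UNIV \<times> (LL k :: 'a list set). F (i#xs))"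
    unfolding e by (subst sum.reindex) (auto simp: case_prod_beta)
  then show ?thesis by (simp add: sum.cartesian_product)
qed

definition ins :: "nat \<Rightarrow> 'a \<Rightarrow> 'a list \<Rightarrow> 'a list" where
  "ins t a xs = take t xs @ a # drop t xs"
definition del :: "nat \<Rightarrow> 'a list \<Rightarrow> 'a list" where
  "del t xs = take t xs @ drop (Suc t) xs"

lemma length_ins[simp]: "t \<le> length xs \<Longrightarrow> length (ins t a xs) = Suc (length xs)"
  by (simp add: ins_def)
lemma ins_nth[simp]: "t \<le> length xs \<Longrightarrow> ins t a xs ! t = a"
  by (simp add: ins_def nth_append)
lemma del_ins[simp]: "t \<le> length xs \<Longrightarrow> del t (ins t a xs) = xs"
  by (simp add: ins_def del_def)
lemma ins_del: "t < length xs \<Longrightarrow> ins t (xs ! t) (del t xs) = xs"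
  by (simp add: ins_def del_def id_take_nth_drop[symmetric] min_def)
lemma length_del[simp]: "t < length xs \<Longrightarrow> length (del t xs) = length xs - 1"
  by (simp add: del_def)
lemma mset_ins[simp]: "mset (ins t a xs) = add_mset a (mset xs)"
proof -
  have "mset (take t xs) + mset (drop t xs) = mset xs" by (metis append_take_drop_id mset_append)
  then show ?thesis by (simp add: ins_def)
qed

lemma sum_LL_ins:
  assumes "t \<le> k"
  shows "(\<Sum>xs\<in>LL (Suc k). F xs) = (\<Sum>i\<in>(UNIV::'a::finite set). \<Sum>xs\<in>LL k. F (ins t i xs))"
proof -
  have "(\<Sum>xs\<in>LL (Suc k). F xs) = (\<Sum>(i,xs)\<in>UNIV \<times> (LL k :: 'a list set). F (ins t i xs))"
    by (rule sum.reindex_bij_witness[where j = "\<lambda>zs. (zs ! t, del t zs)" and i = "\<lambda>(a,xs). ins t a xs"])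
       (use assms in \<open>auto simp: LL_def ins_del\<close>)
  then show ?thesis by (simp add: sum.cartesian_product)
qed



lemma finite_len[simp]: "finite {xs :: 'a::finite list. length xs = k}"
  using finite_LL[of k] by (simp add: LL_def)

lemma Ck_cont: "C_k N f \<Longrightarrow> length is \<le> N \<Longrightarrow> continuous_on UNIV (iter_partial is f)"
  by (simp add: C_k_def)
lemma Ck_diff: "C_k N f \<Longrightarrow> length is < N \<Longrightarrow> \<forall>x. (\<lambda>t. iter_partial is f (x + t *\<^sub>R axis i 1)) differentiable (at 0)"
  by (simp add: C_k_def)

lemma chain_iter:
  fixes f :: "real^'n::finite \<Rightarrow> real"
  assumes sm: "C_k N f" and kN: "k \<le> N"
  shows "(deriv ^^ k) (\<lambda>t. f (p + t *\<^sub>R y)) =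
    (\<lambda>t. \<Sum>is\<in>LL k. iter_partial is f (p + t *\<^sub>R y) * prod_list (map (\<lambda>i. y $ i) is))"
  using kN
proof (induction k)
  case 0
  then show ?case by simp
next
  case (Suc k)
  then have IH: "(deriv ^^ k) (\<lambda>t. f (p + t *\<^sub>R y)) =
    (\<lambda>t. \<Sum>is\<in>LL k. iter_partial is f (p + t *\<^sub>R y) * prod_list (map (\<lambda>i. y $ i) is))" by simp
  have D: "((\<lambda>t. \<Sum>is\<in>LL k. iter_partial is f (p + t *\<^sub>R y) * prod_list (map (\<lambda>i. y $ i) is))
      has_real_derivative (\<Sum>is\<in>LL k. (y \<bullet> grad (iter_partial is f) (p + t *\<^sub>R y)) * prod_list (map (\<lambda>i. y $ i) is))) (at t)"
    for t
  proof (intro DERIV_sum DERIV_cmult_right line_DERIV_grad)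
    fix "is" :: "'n list" and i assume "is \<in> LL k"
    then have l: "length is = k" by (simp add: LL_def)
    show "\<forall>x. (\<lambda>t. iter_partial is f (x + t *\<^sub>R axis i 1)) differentiable (at 0)"
      using Ck_diff[OF sm] l Suc.prems by simp
    show "continuous_on UNIV (partial i (iter_partial is f))"
      using Ck_cont[OF sm, of "i#is"] l Suc.prems by simp
  qed
  have "(deriv ^^ Suc k) (\<lambda>t. f (p + t *\<^sub>R y)) =
     (\<lambda>t. \<Sum>is\<in>LL k. (y \<bullet> grad (iter_partial is f) (p + t *\<^sub>R y)) * prod_list (map (\<lambda>i. y $ i) is))"
    using D by (simp add: IH DERIV_imp_deriv fun_eq_iff)
  also have "\<dots> = (\<lambda>t. \<Sum>is\<in>LL (Suc k). iter_partial is f (p + t *\<^sub>R y) * prod_list (map (\<lambda>i. y $ i) is))"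
  proof
    fix t
    have "(\<Sum>is\<in>LL k. (y \<bullet> grad (iter_partial is f) (p + t *\<^sub>R y)) * prod_list (map (\<lambda>i. y $ i) is))
       = (\<Sum>is\<in>LL k. \<Sum>i\<in>UNIV. iter_partial (i#is) f (p + t *\<^sub>R y) * prod_list (map (\<lambda>i. y $ i) (i#is)))"
      by (simp add: inner_vec_def grad_def sum_distrib_left sum_distrib_right algebra_simps)
    also have "\<dots> = (\<Sum>is\<in>LL (Suc k). iter_partial is f (p + t *\<^sub>R y) * prod_list (map (\<lambda>i. y $ i) is))"
      by (subst sum_LL_Suc, rule sum.swap)
    finally show "(\<Sum>is\<in>LL k. (y \<bullet> grad (iter_partial is f) (p + t *\<^sub>R y)) * prod_list (map (\<lambda>i. y $ i) is))
       = (\<Sum>is\<in>LL (Suc k). iter_partial is f (p + t *\<^sub>R y) * prod_list (map (\<lambda>i. y $ i) is))" .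
  qed
  finally show ?case .
qed

lemma ip_swap:
  fixes f :: "real^'n::finite \<Rightarrow> real"
  assumes sm: "C_k N f" and len: "length pre + length rest + 2 \<le> N"
  shows "iter_partial (pre @ i # j # rest) f = iter_partial (pre @ j # i # rest) f"
proof -
  let ?G = "iter_partial rest f"
  have "partial i (partial j ?G) x = partial j (partial i ?G) x" for x
  proof (rule schwarz)
    show "\<forall>x. (\<lambda>t. ?G (x + t *\<^sub>R axis i 1)) differentiable (at 0)"
      using Ck_diff[OF sm, of rest] len by simp
    show "\<forall>x. (\<lambda>t. ?G (x + t *\<^sub>R axis j 1)) differentiable (at 0)"
      using Ck_diff[OF sm, of rest] len by simp
    show "\<forall>x. (\<lambda>t. partial i ?G (x + t *\<^sub>R axis j 1)) differentiable (at 0)"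
      using Ck_diff[OF sm, of "i#rest"] len by simp
    show "\<forall>x. (\<lambda>t. partial j ?G (x + t *\<^sub>R axis i 1)) differentiable (at 0)"
      using Ck_diff[OF sm, of "j#rest"] len by simp
    show "continuous_on UNIV (partial j (partial i ?G))"
      using Ck_cont[OF sm, of "j#i#rest"] len by simp
    show "continuous_on UNIV (partial i (partial j ?G))"
      using Ck_cont[OF sm, of "i#j#rest"] len by simp
  qed
  then have "partial i (partial j ?G) = partial j (partial i ?G)" by (rule ext)
  then show ?thesis by (simp add: iter_partial_append)
qed

lemma ip_move_front:
  fixes f :: "real^'n::finite \<Rightarrow> real"
  assumes sm: "C_k N f"
  shows "length pre + length ys1 + length ys2 + 1 \<le> N \<Longrightarrow>
    iter_partial (pre @ ys1 @ x # ys2) f = iter_partial (pre @ x # ys1 @ ys2) f"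
proof (induction ys1 arbitrary: pre)
  case Nil
  then show ?case by simp
next
  case (Cons y ys1)
  have "iter_partial (pre @ (y # ys1) @ x # ys2) f = iter_partial ((pre @ [y]) @ ys1 @ x # ys2) f" by simp
  also have "\<dots> = iter_partial ((pre @ [y]) @ x # ys1 @ ys2) f"
    using Cons.IH[of "pre @ [y]"] Cons.prems by simp
  also have "\<dots> = iter_partial (pre @ y # x # (ys1 @ ys2)) f" by simp
  also have "\<dots> = iter_partial (pre @ x # y # (ys1 @ ys2)) f"
    by (rule ip_swap[OF sm]) (use Cons.prems in simp)
  finally show ?case by simp
qed

lemma ip_perm_aux:
  fixes f :: "real^'n::finite \<Rightarrow> real"
  assumes sm: "C_k N f"
  shows "mset xs = mset ys \<Longrightarrow> length pre + length xs \<le> N \<Longrightarrow>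
    iter_partial (pre @ xs) f = iter_partial (pre @ ys) f"
proof (induction xs arbitrary: pre ys)
  case Nil
  then show ?case by simp
next
  case (Cons x xs)
  have "x \<in> set ys" using Cons.prems(1) by (metis list.set_intros(1) set_mset_mset)
  then obtain ys1 ys2 where ys: "ys = ys1 @ x # ys2" by (meson split_list)
  have m: "mset xs = mset (ys1 @ ys2)" using Cons.prems(1) ys by simp
  have l: "length ys = Suc (length xs)" using Cons.prems(1) by (metis length_Cons mset_eq_length)
  have "iter_partial (pre @ x # xs) f = iter_partial ((pre @ [x]) @ xs) f" by simp
  also have "\<dots> = iter_partial ((pre @ [x]) @ ys1 @ ys2) f"
    using Cons.IH[of "ys1 @ ys2" "pre @ [x]"] m Cons.prems(2) by simp
  also have "\<dots> = iter_partial (pre @ ys1 @ x # ys2) f"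
    using ip_move_front[OF sm, of pre ys1 ys2 x] Cons.prems(2) l ys by simp
  finally show ?case using ys by simp
qed

lemma ip_perm:
  fixes f :: "real^'n::finite \<Rightarrow> real"
  assumes sm: "C_k N f" and "mset xs = mset ys" and "length xs \<le> N"
  shows "iter_partial xs f = iter_partial ys f"
  using ip_perm_aux[OF sm assms(2), of "[]"] assms(3) by simp

fun cq :: "real^'n^'n \<Rightarrow> 'n list \<Rightarrow> real" where
  "cq Q (i # j # rest) = Q $ i $ j * cq Q rest"
| "cq Q _ = 1"

lemma partial_sum:
  fixes g :: "'a \<Rightarrow> real^'n::finite \<Rightarrow> real"
  assumes "finite A" "\<And>a. a \<in> A \<Longrightarrow> (\<lambda>t. g a (x + t *\<^sub>R axis i 1)) differentiable (at 0)"
  shows "partial i (\<lambda>x. \<Sum>a\<in>A. c a * g a x) x = (\<Sum>a\<in>A. c a * partial i (g a) x)"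
proof -
  have "((\<lambda>t. \<Sum>a\<in>A. c a * g a (x + t *\<^sub>R axis i 1)) has_real_derivative
      (\<Sum>a\<in>A. c a * deriv (\<lambda>t. g a (x + t *\<^sub>R axis i 1)) 0)) (at 0)"
    by (intro DERIV_sum DERIV_cmult) (use assms DERIV_deriv_iff_real_differentiable in blast)
  then show ?thesis by (simp add: partial_def DERIV_imp_deriv)
qed

lemma quad_iter:
  fixes f :: "real^'n::finite \<Rightarrow> real"
  assumes sm: "C_k (2*m+1) f"
  shows "k \<le> m \<Longrightarrow> (quad_op Q ^^ k) f = (\<lambda>x. \<Sum>is\<in>LL (2*k). cq Q is * iter_partial is f x)"
proof (induction k)
  case 0
  then show ?case by simp
next
  case (Suc k)
  then have IH: "(quad_op Q ^^ k) f = (\<lambda>x. \<Sum>is\<in>LL (2*k). cq Q is * iter_partial is f x)" by simp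
  have pj: "partial j (\<lambda>x. \<Sum>is\<in>LL (2*k). cq Q is * iter_partial is f x)
      = (\<lambda>x. \<Sum>is\<in>LL (2*k). cq Q is * iter_partial (j#is) f x)" for j
  proof
    fix x
    show "partial j (\<lambda>x. \<Sum>is\<in>LL (2*k). cq Q is * iter_partial is f x) x
      = (\<Sum>is\<in>LL (2*k). cq Q is * iter_partial (j#is) f x)"
      by (subst partial_sum) (use Ck_diff[OF sm] Suc.prems in \<open>auto simp: LL_def\<close>)
  qed
  have pij: "partial i (\<lambda>x. \<Sum>is\<in>LL (2*k). cq Q is * iter_partial (j#is) f x) x
      = (\<Sum>is\<in>LL (2*k). cq Q is * iter_partial (i#j#is) f x)" for i j x
    by (subst partial_sum) (use Ck_diff[OF sm, of "j#_"] Suc.prems in \<open>auto simp: LL_def\<close>)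
  show ?case
  proof
    fix x
    have "(quad_op Q ^^ Suc k) f x = quad_op Q (\<lambda>x. \<Sum>is\<in>LL (2*k). cq Q is * iter_partial is f x) x"
      using IH by simp
    also have "\<dots> = (\<Sum>i\<in>UNIV. \<Sum>j\<in>UNIV. Q $ i $ j * (\<Sum>is\<in>LL (2*k). cq Q is * iter_partial (i#j#is) f x))"
      unfolding quad_op_def pj pij ..
    also have "\<dots> = (\<Sum>i\<in>UNIV. \<Sum>j\<in>UNIV. \<Sum>is\<in>LL (2*k). cq Q (i#j#is) * iter_partial (i#j#is) f x)"
      by (simp add: sum_distrib_left mult.assoc)
    also have "\<dots> = (\<Sum>is\<in>LL (2 * Suc k). cq Q is * iter_partial is f x)"
      by (simp add: sum_LL_Suc)
    finally show "(quad_op Q ^^ Suc k) f x = (\<Sum>is\<in>LL (2 * Suc k). cq Q is * iter_partial is f x)" .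
  qed
qed

lemma grad_quad:
  fixes f :: "real^'n::finite \<Rightarrow> real"
  assumes sm: "C_k (2*m+1) f"
  shows "grad ((quad_op Q ^^ m) f) x $ l = (\<Sum>is\<in>LL (2*m). cq Q is * iter_partial (l#is) f x)"
  unfolding quad_iter[OF sm order_refl] grad_def
  by (simp, subst partial_sum) (use Ck_diff[OF sm] in \<open>auto simp: LL_def\<close>)



definition BF :: "('n::finite \<Rightarrow> 'n \<Rightarrow> real) \<Rightarrow> ('n \<Rightarrow> real) \<Rightarrow> ('n \<Rightarrow> real) \<Rightarrow> real" where
  "BF q y z = (\<Sum>i\<in>UNIV. \<Sum>j\<in>UNIV. y i * q i j * z j)"

definition dl :: "'n \<Rightarrow> 'n \<Rightarrow> real" where "dl k = (\<lambda>i. if i = k then 1 else 0)"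

lemma mult_if1: "(if P then 1 else 0) * (z::real) = (if P then z else 0)" by simp
lemma mult_if2: "(z::real) * (if P then 1 else 0) = (if P then z else 0)" by simp

lemma BF_lin:
  "BF q (\<lambda>i. a * u i + b * w i) (\<lambda>i. a * u i + b * w i)
   = a * a * BF q u u + a * b * BF q u w + a * b * BF q w u + b * b * BF q w w"
  unfolding BF_def
  by (simp add: algebra_simps sum.distrib sum_distrib_left)

lemma BF_lin1:
  "BF q (\<lambda>i. u i + b * w i) (\<lambda>i. u i + b * w i)
   = BF q u u + b * BF q u w + b * BF q w u + b * b * BF q w w"
  using BF_lin[of q 1 u b w] by simp

lemma BF_dl[simp]: "BF q (dl k) (dl j) = q k j"
  by (simp add: BF_def dl_def mult_if1 mult_if2 sum.delta)

lemma BF_dl_right: "BF q y (dl k) = (\<Sum>i\<in>UNIV. y i * q i k)"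
  by (simp add: BF_def dl_def mult_if1 mult_if2 sum.delta)
lemma mult_if3: "(if P then (a::real) else 0) * b = (if P then a * b else 0)" by simp
lemma BF_dl_left: "BF q (dl k) y = (\<Sum>j\<in>UNIV. q k j * y j)"
  unfolding BF_def by (subst sum.swap) (simp add: dl_def mult_if1 mult_if3 sum.delta)

lemma BF_sym: "(\<forall>i j. q i j = q j i) \<Longrightarrow> BF q u w = BF q w u"
  unfolding BF_def by (subst sum.swap) (simp add: mult_ac)

lemma psd_zero_row:
  assumes sym: "\<forall>i j. q i j = q j i" and psd: "\<forall>y. 0 \<le> BF q y y" and z: "q k k = 0"
  shows "q k j = 0"
proof (rule ccontr)
  assume ne: "q k j \<noteq> 0"
  define a where "a = - (q j j + 1) / (2 * q k j)"
  have "0 \<le> BF q (\<lambda>i. a * dl k i + 1 * dl j i) (\<lambda>i. a * dl k i + 1 * dl j i)"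
    using psd by blast
  also have "\<dots> = 2 * a * q k j + q j j"
    unfolding BF_lin using z sym by simp
  also have "\<dots> = -1" using ne by (simp add: a_def field_simps)
  finally show False by simp
qed

lemma psd_cs:
  assumes sym: "\<forall>i j. q i j = q j i" and psd: "\<forall>y. 0 \<le> BF q y y" and p: "q k k > 0"
  shows "(BF q y (dl k))^2 \<le> BF q y y * q k k"
proof -
  define a where "a = - BF q y (dl k) / q k k"
  have "0 \<le> BF q (\<lambda>i. y i + a * dl k i) (\<lambda>i. y i + a * dl k i)"
    using psd by blast
  also have "\<dots> = BF q y y + 2 * a * BF q y (dl k) + a * a * q k k"
    unfolding BF_lin1 using BF_sym[OF sym, of "dl k" y] by simp
  also have "\<dots> = BF q y y - (BF q y (dl k))^2 / q k k"
    using p by (simp add: a_def field_simps power2_eq_square)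
  finally have "(BF q y (dl k))^2 / q k k \<le> BF q y y" by simp
  then show ?thesis using p by (simp add: field_simps)
qed

lemma chol_aux:
  fixes S :: "'n::finite set"
  assumes "finite S"
  shows "\<forall>q. (\<forall>i j. q i j = q j i) \<longrightarrow> (\<forall>y. 0 \<le> BF q y y) \<longrightarrow> (\<forall>i j. i \<notin> S \<longrightarrow> q i j = 0) \<longrightarrow>
     (\<exists>M. (\<forall>i j. q i j = (\<Sum>l\<in>UNIV. M i l * M j l)) \<and> (\<forall>i l. l \<notin> S \<longrightarrow> M i l = 0))"
  using assms
proof (induction S)
  case empty
  show ?case
  proof (intro allI impI)
    fix q :: "'n \<Rightarrow> 'n \<Rightarrow> real" assume "\<forall>i j. i \<notin> {} \<longrightarrow> q i j = 0"
    then show "\<exists>M. (\<forall>i j. q i j = (\<Sum>l\<in>UNIV. M i l * M j l)) \<and> (\<forall>i l. l \<notin> {} \<longrightarrow> M i l = 0)"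
      by (intro exI[of _ "\<lambda>i l. 0"]) simp
  qed
next
  case (insert k S)
  show ?case
  proof (intro allI impI)
    fix q :: "'n \<Rightarrow> 'n \<Rightarrow> real"
    assume sym: "\<forall>i j. q i j = q j i" and psd: "\<forall>y. 0 \<le> BF q y y"
      and sup: "\<forall>i j. i \<notin> insert k S \<longrightarrow> q i j = 0"
    have qkk: "q k k \<ge> 0" using psd[rule_format, of "dl k"] by simp
    show "\<exists>M. (\<forall>i j. q i j = (\<Sum>l\<in>UNIV. M i l * M j l)) \<and> (\<forall>i l. l \<notin> insert k S \<longrightarrow> M i l = 0)"
    proof (cases "q k k = 0")
      case True
      have "\<forall>i j. i \<notin> S \<longrightarrow> q i j = 0"
        using sup psd_zero_row[OF sym psd True] by (metis insert_iff)
      then obtain M where "\<forall>i j. q i j = (\<Sum>l\<in>UNIV. M i l * M j l)" "\<forall>i l. l \<notin> S \<longrightarrow> M i l = 0"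
        using insert.IH sym psd by blast
      then show ?thesis by (intro exI[of _ M]) auto
    next
      case False
      then have p: "q k k > 0" using qkk by simp
      define c where "c = sqrt (q k k)"
      have c: "c > 0" "c * c = q k k" using p by (auto simp: c_def)
      define v where "v i = q i k / c" for i
      define q' where "q' i j = q i j - v i * v j" for i j
      have sym': "\<forall>i j. q' i j = q' j i" using sym by (auto simp: q'_def)
      have Bq': "BF q' y y = BF q y y - (BF q y (dl k))^2 / q k k" for y
      proof -
        have "BF q' y y = BF q y y - (\<Sum>i\<in>UNIV. y i * v i) * (\<Sum>j\<in>UNIV. y j * v j)"
          by (simp add: BF_def q'_def algebra_simps sum_subtractf sum_distrib_left sum_distrib_right)
        also have "(\<Sum>i\<in>UNIV. y i * v i) = BF q y (dl k) / c"
          by (simp add: BF_dl_right v_def sum_divide_distrib)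
        finally show ?thesis using c by (simp add: power2_eq_square)
      qed
      have psd': "\<forall>y. 0 \<le> BF q' y y"
      proof
        fix y
        have "(BF q y (dl k))^2 / q k k \<le> BF q y y"
          using psd_cs[OF sym psd p, of y] p by (simp add: field_simps)
        then show "0 \<le> BF q' y y" using Bq' by simp
      qed
      have sup': "\<forall>i j. i \<notin> S \<longrightarrow> q' i j = 0"
      proof (intro allI impI)
        fix i j assume "i \<notin> S"
        show "q' i j = 0"
        proof (cases "i = k")
          case True
          have vk: "v k = c" using c by (simp add: v_def c(2)[symmetric])
          have vj: "v j = q j k / c" by (simp add: v_def)
          have "v k * v j = q j k" unfolding vk vj using c by simp
          then show ?thesis using True sym by (simp add: q'_def)
        next
          case False
          then show ?thesis using sup \<open>i \<notin> S\<close> by (simp add: q'_def v_def)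
        qed
      qed
      obtain M' where M': "\<forall>i j. q' i j = (\<Sum>l\<in>UNIV. M' i l * M' j l)" "\<forall>i l. l \<notin> S \<longrightarrow> M' i l = 0"
        using insert.IH sym' psd' sup' by blast
      define M where "M i l = (if l = k then v i else M' i l)" for i l
      have "q i j = (\<Sum>l\<in>UNIV. M i l * M j l)" for i j
      proof -
        have "(\<Sum>l\<in>UNIV. M i l * M j l) = M i k * M j k + (\<Sum>l\<in>UNIV - {k}. M i l * M j l)"
          by (simp add: sum.remove)
        also have "\<dots> = v i * v j + (\<Sum>l\<in>UNIV - {k}. M' i l * M' j l)"
          by (simp add: M_def)
        also have "(\<Sum>l\<in>UNIV - {k}. M' i l * M' j l) = (\<Sum>l\<in>UNIV. M' i l * M' j l)"
          using M'(2) insert.hyps sum.remove[of "UNIV::'n set" k "\<lambda>l. M' i l * M' j l"] by simp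
        finally show ?thesis using M'(1)[rule_format, of i j] by (simp add: q'_def)
      qed
      moreover have "\<forall>i l. l \<notin> insert k S \<longrightarrow> M i l = 0" using M'(2) by (simp add: M_def)
      ultimately show ?thesis by blast
    qed
  qed
qed

lemma cholesky:
  fixes Q :: "real^'n::finite^'n"
  assumes "pos_def_mat Q"
  shows "\<exists>M::'n \<Rightarrow> 'n \<Rightarrow> real. \<forall>i j. Q $ i $ j = (\<Sum>l\<in>UNIV. M i l * M j l)"
proof -
  have sym: "\<forall>i j. Q $ i $ j = Q $ j $ i"
    using assms unfolding pos_def_mat_def by (metis transpose_def vec_lambda_beta)
  have psd: "\<forall>y. 0 \<le> BF (\<lambda>i j. Q $ i $ j) y y"
  proof
    fix y :: "'n \<Rightarrow> real"
    have e: "BF (\<lambda>i j. Q $ i $ j) y y = (\<chi> i. y i) \<bullet> (Q *v (\<chi> i. y i))"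
      by (simp add: BF_def inner_vec_def matrix_vector_mult_def sum_distrib_left mult_ac)
    show "0 \<le> BF (\<lambda>i j. Q $ i $ j) y y"
    proof (cases "(\<chi> i. y i) = 0")
      case True
      then show ?thesis unfolding e by simp
    next
      case False
      then show ?thesis unfolding e using assms unfolding pos_def_mat_def by (simp add: less_imp_le)
    qed
  qed
  show ?thesis using chol_aux[of "UNIV::'n set"] sym psd by auto
qed



definition mom :: "nat \<Rightarrow> real" where
  "mom r = integral\<^sup>L std_normal_distribution (\<lambda>x. x ^ r)"

lemma mom_even: "mom (2 * k) = fact (2 * k) / (2 ^ k * fact k)"
  using std_normal_distribution_even_moments(1)[of k] by (simp add: mom_def)

lemma mom_odd: "odd r \<Longrightarrow> mom r = 0"
  using integral_std_normal_distribution_moment_odd by (simp add: mom_def)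

lemma mom_0[simp]: "mom 0 = 1"
  using mom_even[of 0] by simp

lemma mom_1[simp]: "mom (Suc 0) = 0"
  using mom_odd[of 1] by simp

lemma mom_rec: "mom (Suc (Suc r)) = real (Suc r) * mom r"
proof (cases "even r")
  case True
  then obtain k where r: "r = 2 * k" by (auto elim: evenE)
  have "mom (Suc (Suc r)) = mom (2 * Suc k)" by (simp add: r)
  also have "\<dots> = fact (2 * Suc k) / (2 ^ Suc k * fact (Suc k))" by (rule mom_even)
  also have "fact (2 * Suc k) = (2 * real k + 2) * ((2 * real k + 1) * (fact (2 * k) :: real))"
  proof -
    have "2 * Suc k = Suc (Suc (2 * k))" by simp
    then show ?thesis by (simp only: fact_Suc) (simp add: algebra_simps)
  qed
  also have "2 ^ Suc k * fact (Suc k) = (2 * real k + 2) * (2 ^ k * (fact k :: real))"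
    by (simp add: algebra_simps)
  also have "(2 * real k + 2) * ((2 * real k + 1) * fact (2 * k)) / ((2 * real k + 2) * (2 ^ k * fact k))
     = (2 * real k + 1) * fact (2 * k) / (2 ^ k * fact k)"
    by (rule nonzero_mult_divide_mult_cancel_left) simp
  also have "\<dots> = real (Suc r) * (fact (2 * k) / (2 ^ k * fact k))"
    by (simp add: r)
  finally show ?thesis by (simp add: r mom_even)
next
  case False
  then show ?thesis by (simp add: mom_odd)
qed

definition V :: "'n::finite list \<Rightarrow> real" where
  "V ks = (\<Prod>k\<in>UNIV. mom (count (mset ks) k))"

lemma V_Nil[simp]: "V [] = 1" by (simp add: V_def)

lemma mset_del: "t < length ks \<Longrightarrow> mset (del t ks) = mset ks - {#ks ! t#}"
proof -
  assume t: "t < length ks"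
  have "mset ks = add_mset (ks ! t) (mset (del t ks))"
    using ins_del[OF t] mset_ins by metis
  then show ?thesis by simp
qed

lemma V_Cons: "V (k # ks) = (\<Sum>t<length ks. if ks ! t = k then V (del t ks) else 0)"
proof -
  define c where "c = count (mset ks) k"
  define P where "P = (\<Prod>k'\<in>UNIV - {k}. mom (count (mset ks) k'))"
  have L: "V (k # ks) = mom (Suc c) * P"
  proof -
    have "V (k # ks) = mom (count (mset (k#ks)) k) * (\<Prod>k'\<in>UNIV - {k}. mom (count (mset (k#ks)) k'))"
      unfolding V_def by (rule prod.remove) simp_all
    also have "(\<Prod>k'\<in>UNIV - {k}. mom (count (mset (k#ks)) k')) = P"
      unfolding P_def by (intro prod.cong) auto
    finally show ?thesis by (simp add: c_def)
  qed
  have D: "V (del t ks) = mom (c - 1) * P" if "t < length ks" "ks ! t = k" for t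
  proof -
    have m: "mset (del t ks) = mset ks - {#k#}" using mset_del[OF that(1)] that(2) by simp
    have "V (del t ks) = mom (count (mset (del t ks)) k) * (\<Prod>k'\<in>UNIV - {k}. mom (count (mset (del t ks)) k'))"
      unfolding V_def by (rule prod.remove) simp_all
    also have "(\<Prod>k'\<in>UNIV - {k}. mom (count (mset (del t ks)) k')) = P"
      unfolding P_def m by (intro prod.cong) auto
    finally show ?thesis by (simp add: m c_def)
  qed
  have "(\<Sum>t<length ks. if ks ! t = k then V (del t ks) else 0)
      = (\<Sum>t<length ks. if ks ! t = k then mom (c - 1) * P else 0)"
    using D by (intro sum.cong) auto
  also have "\<dots> = (\<Sum>t\<in>{t\<in>{..<length ks}. ks ! t = k}. mom (c - 1) * P)"
    by (rule sum.inter_filter[symmetric]) simp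
  also have "\<dots> = real (card {t\<in>{..<length ks}. ks ! t = k}) * (mom (c - 1) * P)"
    by simp
  also have "card {t\<in>{..<length ks}. ks ! t = k} = c"
  proof -
    have fe: "filter ((=) k) ks = filter (\<lambda>y. y = k) ks" by (induction ks) auto
    have "c = length (filter (\<lambda>y. y = k) ks)"
      by (simp add: c_def count_mset count_list_eq_length_filter fe)
    also have "\<dots> = card {i. i < length ks \<and> ks ! i = k}" by (rule length_filter_conv_card)
    moreover have "{t\<in>{..<length ks}. ks ! t = k} = {i. i < length ks \<and> ks ! i = k}" by auto
    ultimately show ?thesis by simp
  qed
  finally have R: "(\<Sum>t<length ks. if ks ! t = k then V (del t ks) else 0) = real c * (mom (c - 1) * P)" .
  show ?thesis
  proof (cases c)
    case 0
    then show ?thesis using L R by simp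
  next
    case (Suc c')
    then show ?thesis using L R mom_rec[of c'] by simp
  qed
qed



fun mp :: "('n \<Rightarrow> 'n \<Rightarrow> real) \<Rightarrow> 'n list \<Rightarrow> 'n list \<Rightarrow> real" where
  "mp M (i # is) (k # ks) = M i k * mp M is ks"
| "mp M _ _ = 1"

lemma mp_ins:
  "length js = length ks \<Longrightarrow> t \<le> length js \<Longrightarrow> mp M (ins t i js) (ins t k ks) = M i k * mp M js ks"
proof (induction js arbitrary: t ks)
  case Nil
  then show ?case by (simp add: ins_def)
next
  case (Cons j js)
  then obtain k' ks' where ks: "ks = k' # ks'" by (cases ks) auto
  show ?case
  proof (cases t)
    case 0
    then show ?thesis using ks by (simp add: ins_def)
  next
    case (Suc t')
    have "ins t i (j # js) = j # ins t' i js" "ins t k ks = k' # ins t' k ks'"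
      using Suc ks by (simp_all add: ins_def)
    then show ?thesis using Cons Suc ks by simp
  qed
qed

definition W :: "('n::finite \<Rightarrow> 'n \<Rightarrow> real) \<Rightarrow> 'n list \<Rightarrow> real" where
  "W M is = (\<Sum>ks\<in>LL (length is). mp M is ks * V ks)"

definition QM :: "('n::finite \<Rightarrow> 'n \<Rightarrow> real) \<Rightarrow> 'n \<Rightarrow> 'n \<Rightarrow> real" where
  "QM M i j = (\<Sum>l\<in>UNIV. M i l * M j l)"

lemma if_mult0: "(a::real) * (if P then b else 0) = (if P then a * b else 0)" by simp

lemma W_Nil[simp]: "W M [] = 1" by (simp add: W_def)

lemma W_Cons:
  fixes M :: "'n::finite \<Rightarrow> 'n \<Rightarrow> real"
  shows "W M (i # is) = (\<Sum>t<length is. \<Sum>ks\<in>LL (length is). M i (ks ! t) * mp M is ks * V (del t ks))"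
proof -
  have "W M (i # is) = (\<Sum>k\<in>UNIV. \<Sum>ks\<in>LL (length is). mp M (i#is) (k#ks) * V (k#ks))"
    by (simp add: W_def sum_LL_Suc)
  also have "\<dots> = (\<Sum>k\<in>UNIV. \<Sum>ks\<in>LL (length is). \<Sum>t<length is.
       (if ks ! t = k then M i k * mp M is ks * V (del t ks) else 0))"
  proof (rule sum.cong[OF refl], rule sum.cong[OF refl])
    fix k :: 'n and ks :: "'n list" assume "ks \<in> LL (length is)"
    then have l: "length ks = length is" by (simp add: LL_def)
    show "mp M (i#is) (k#ks) * V (k#ks) = (\<Sum>t<length is.
       (if ks ! t = k then M i k * mp M is ks * V (del t ks) else 0))"
      unfolding V_Cons l by (simp add: sum_distrib_left if_mult0 mult_ac)
  qed
  also have "\<dots> = (\<Sum>ks\<in>LL (length is). \<Sum>t<length is. \<Sum>k\<in>UNIV.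
       (if ks ! t = k then M i k * mp M is ks * V (del t ks) else 0))"
    by (subst sum.swap, rule sum.cong[OF refl], rule sum.swap)
  also have "\<dots> = (\<Sum>ks\<in>LL (length is). \<Sum>t<length is. M i (ks ! t) * mp M is ks * V (del t ks))"
    by (simp add: sum.delta')
  also have "\<dots> = (\<Sum>t<length is. \<Sum>ks\<in>LL (length is). M i (ks ! t) * mp M is ks * V (del t ks))"
    by (rule sum.swap)
  finally show ?thesis .
qed



lemma W_step_t:
  fixes M :: "'n::finite \<Rightarrow> 'n \<Rightarrow> real" and F :: "'n list \<Rightarrow> real"
  assumes tL: "t < L"
  shows "(\<Sum>is\<in>LL L. \<Sum>ks\<in>LL L. M i (ks ! t) * mp M is ks * V (del t ks) * F is)
       = (\<Sum>i'\<in>UNIV. \<Sum>js\<in>LL (L - 1). QM M i i' * W M js * F (ins t i' js))"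
proof -
  obtain L' where L: "L = Suc L'" using tL by (cases L) auto
  have tL': "t \<le> L'" using tL L by simp
  have inner: "(\<Sum>ks\<in>LL L. M i (ks ! t) * mp M (ins t i' js) ks * V (del t ks) * F (ins t i' js))
      = QM M i i' * W M js * F (ins t i' js)" if js: "js \<in> LL L'" for i' js
  proof -
    have lj: "length js = L'" using js by (simp add: LL_def)
    have "(\<Sum>ks\<in>LL L. M i (ks ! t) * mp M (ins t i' js) ks * V (del t ks) * F (ins t i' js))
      = (\<Sum>k'\<in>UNIV. \<Sum>ks'\<in>LL L'. M i (ins t k' ks' ! t) * mp M (ins t i' js) (ins t k' ks')
           * V (del t (ins t k' ks')) * F (ins t i' js))"
      unfolding L by (rule sum_LL_ins[OF tL'])
    also have "\<dots> = (\<Sum>k'\<in>UNIV. \<Sum>ks'\<in>LL L'. M i k' * M i' k' * mp M js ks' * V ks' * F (ins t i' js))"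
    proof (rule sum.cong[OF refl], rule sum.cong[OF refl])
      fix k' :: 'n and ks' :: "'n list" assume "ks' \<in> LL L'"
      then have lk: "length ks' = L'" by (simp add: LL_def)
      show "M i (ins t k' ks' ! t) * mp M (ins t i' js) (ins t k' ks') * V (del t (ins t k' ks')) * F (ins t i' js)
          = M i k' * M i' k' * mp M js ks' * V ks' * F (ins t i' js)"
        using lk lj tL' by (simp add: mp_ins)
    qed
    also have "\<dots> = (\<Sum>k'\<in>UNIV. M i k' * M i' k') * (\<Sum>ks'\<in>LL L'. mp M js ks' * V ks') * F (ins t i' js)"
      by (simp add: sum_distrib_left sum_distrib_right mult_ac, rule sum.swap)
    also have "\<dots> = QM M i i' * W M js * F (ins t i' js)"
      by (simp add: QM_def W_def lj)
    finally show ?thesis .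
  qed
  have "(\<Sum>is\<in>LL L. \<Sum>ks\<in>LL L. M i (ks ! t) * mp M is ks * V (del t ks) * F is)
     = (\<Sum>i'\<in>UNIV. \<Sum>js\<in>LL L'. \<Sum>ks\<in>LL L. M i (ks ! t) * mp M (ins t i' js) ks * V (del t ks) * F (ins t i' js))"
    unfolding L by (rule sum_LL_ins[OF tL'])
  also have "\<dots> = (\<Sum>i'\<in>UNIV. \<Sum>js\<in>LL L'. QM M i i' * W M js * F (ins t i' js))"
    using inner unfolding L by (intro sum.cong refl) auto
  finally show ?thesis using L by simp
qed

lemma WS:
  fixes M :: "'n::finite \<Rightarrow> 'n \<Rightarrow> real" and F :: "'n list \<Rightarrow> real"
  shows "(\<Sum>is\<in>LL L. W M (i # is) * F is)
       = (\<Sum>t<L. \<Sum>i'\<in>UNIV. \<Sum>js\<in>LL (L - 1). QM M i i' * W M js * F (ins t i' js))"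
proof -
  have "(\<Sum>is\<in>LL L. W M (i # is) * F is)
      = (\<Sum>is\<in>LL L. \<Sum>t<L. \<Sum>ks\<in>LL L. M i (ks ! t) * mp M is ks * V (del t ks) * F is)"
  proof (rule sum.cong[OF refl])
    fix "is" :: "'n list" assume "is \<in> LL L"
    then have l: "length is = L" by (simp add: LL_def)
    show "W M (i # is) * F is = (\<Sum>t<L. \<Sum>ks\<in>LL L. M i (ks ! t) * mp M is ks * V (del t ks) * F is)"
      unfolding W_Cons l by (simp add: sum_distrib_right)
  qed
  also have "\<dots> = (\<Sum>t<L. \<Sum>is\<in>LL L. \<Sum>ks\<in>LL L. M i (ks ! t) * mp M is ks * V (del t ks) * F is)"
    by (rule sum.swap)
  also have "\<dots> = (\<Sum>t<L. \<Sum>i'\<in>UNIV. \<Sum>js\<in>LL (L - 1). QM M i i' * W M js * F (ins t i' js))"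
    by (rule sum.cong[OF refl]) (simp add: W_step_t)
  finally show ?thesis .
qed

lemma WS_sym:
  fixes M :: "'n::finite \<Rightarrow> 'n \<Rightarrow> real" and F :: "'n list \<Rightarrow> real"
  assumes Fsym: "\<And>xs ys. mset xs = mset ys \<Longrightarrow> length xs = L \<Longrightarrow> F xs = F ys"
  shows "(\<Sum>is\<in>LL L. W M (i # is) * F is)
       = real L * (\<Sum>i'\<in>UNIV. \<Sum>js\<in>LL (L - 1). QM M i i' * W M js * F (i' # js))"
proof -
  have "(\<Sum>is\<in>LL L. W M (i # is) * F is)
       = (\<Sum>t<L. \<Sum>i'\<in>UNIV. \<Sum>js\<in>LL (L - 1). QM M i i' * W M js * F (ins t i' js))"
    by (rule WS)
  also have "\<dots> = (\<Sum>t<L. \<Sum>i'\<in>UNIV. \<Sum>js\<in>LL (L - 1). QM M i i' * W M js * F (i' # js))"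
  proof (rule sum.cong[OF refl], rule sum.cong[OF refl], rule sum.cong[OF refl])
    fix t :: nat and i' :: 'n and js :: "'n list" assume t: "t \<in> {..<L}" and js: "js \<in> LL (L - 1)"
    have "F (ins t i' js) = F (i' # js)"
      using t js by (intro Fsym) (auto simp: LL_def)
    then show "QM M i i' * W M js * F (ins t i' js) = QM M i i' * W M js * F (i' # js)" by simp
  qed
  also have "\<dots> = real L * (\<Sum>i'\<in>UNIV. \<Sum>js\<in>LL (L - 1). QM M i i' * W M js * F (i' # js))"
    by simp
  finally show ?thesis .
qed

fun cc :: "nat \<Rightarrow> real" where
  "cc 0 = 1"
| "cc (Suc j) = real (2 * j + 1) * cc j"

lemma cc_pos: "cc j > 0" by (induction j) auto

lemma wick:
  fixes M :: "'n::finite \<Rightarrow> 'n \<Rightarrow> real" and D :: "'n list \<Rightarrow> real" and Q :: "real^'n^'n"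
  assumes Dsym: "\<And>xs ys. mset xs = mset ys \<Longrightarrow> length xs = N \<Longrightarrow> D xs = D ys"
    and QQ: "\<And>i i'. Q $ i $ i' = QM M i i'"
  shows "length pre + 2 * j = N \<Longrightarrow>
    (\<Sum>js\<in>LL (2 * j). W M js * D (pre @ js)) = cc j * (\<Sum>js\<in>LL (2 * j). cq Q js * D (pre @ js))"
proof (induction j arbitrary: pre)
  case 0
  then show ?case by simp
next
  case (Suc j)
  have e2: "2 * Suc j = Suc (Suc (2 * j))" by simp
  have "(\<Sum>js\<in>LL (2 * Suc j). W M js * D (pre @ js))
      = (\<Sum>i\<in>UNIV. \<Sum>is\<in>LL (Suc (2 * j)). W M (i # is) * D (pre @ i # is))"
    unfolding e2 by (subst sum_LL_Suc) simp
  also have "\<dots> = (\<Sum>i\<in>UNIV. real (Suc (2 * j)) * (\<Sum>i'\<in>UNIV. \<Sum>js\<in>LL (2 * j).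
        QM M i i' * W M js * D (pre @ i # i' # js)))"
  proof (rule sum.cong[OF refl])
    fix i
    have "(\<Sum>is\<in>LL (Suc (2 * j)). W M (i # is) * (\<lambda>is. D (pre @ i # is)) is)
       = real (Suc (2 * j)) * (\<Sum>i'\<in>UNIV. \<Sum>js\<in>LL (Suc (2 * j) - 1). QM M i i' * W M js * (\<lambda>is. D (pre @ i # is)) (i' # js))"
    proof (rule WS_sym)
      fix xs ys :: "'n list" assume "mset xs = mset ys" "length xs = Suc (2 * j)"
      then show "D (pre @ i # xs) = D (pre @ i # ys)"
        using Suc.prems by (intro Dsym) auto
    qed
    then show "(\<Sum>is\<in>LL (Suc (2 * j)). W M (i # is) * D (pre @ i # is))
      = real (Suc (2 * j)) * (\<Sum>i'\<in>UNIV. \<Sum>js\<in>LL (2 * j). QM M i i' * W M js * D (pre @ i # i' # js))"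
      by simp
  qed
  also have "\<dots> = (\<Sum>i\<in>UNIV. \<Sum>i'\<in>UNIV. real (Suc (2 * j)) * QM M i i' *
        (\<Sum>js\<in>LL (2 * j). W M js * D ((pre @ [i, i']) @ js)))"
    by (simp add: sum_distrib_left mult_ac)
  also have "\<dots> = (\<Sum>i\<in>UNIV. \<Sum>i'\<in>UNIV. real (Suc (2 * j)) * QM M i i' *
        (cc j * (\<Sum>js\<in>LL (2 * j). cq Q js * D ((pre @ [i, i']) @ js))))"
  proof (rule sum.cong[OF refl], rule sum.cong[OF refl])
    fix i i' :: 'n
    have "length (pre @ [i, i']) + 2 * j = N" using Suc.prems by simp
    from Suc.IH[OF this] show "real (Suc (2 * j)) * QM M i i' * (\<Sum>js\<in>LL (2 * j). W M js * D ((pre @ [i, i']) @ js))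
      = real (Suc (2 * j)) * QM M i i' * (cc j * (\<Sum>js\<in>LL (2 * j). cq Q js * D ((pre @ [i, i']) @ js)))"
      by simp
  qed
  also have "\<dots> = cc (Suc j) * (\<Sum>i\<in>UNIV. \<Sum>i'\<in>UNIV. \<Sum>js\<in>LL (2 * j). cq Q (i # i' # js) * D (pre @ i # i' # js))"
    by (simp add: QQ sum_distrib_left mult_ac)
  also have "\<dots> = cc (Suc j) * (\<Sum>js\<in>LL (2 * Suc j). cq Q js * D (pre @ js))"
    unfolding e2 by (simp add: sum_LL_Suc)
  finally show ?case .
qed



abbreviation NM :: "real measure" where "NM \<equiv> std_normal_distribution"

lemma NM_prob: "prob_space NM"
  using real_dist_normal_dist by (simp add: real_distribution_def)

lemma PSF: "product_sigma_finite (\<lambda>_::'n. NM)"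
  unfolding product_sigma_finite_def using prob_space_imp_sigma_finite[OF NM_prob] by simp

lemma prod_list_count:
  fixes x :: "'n::finite \<Rightarrow> real"
  shows "prod_list (map x ks) = (\<Prod>k\<in>UNIV. x k ^ count (mset ks) k)"
proof (induction ks)
  case Nil
  then show ?case by simp
next
  case (Cons k ks)
  have "(\<Prod>k'\<in>UNIV. x k' ^ count (mset (k # ks)) k')
      = (\<Prod>k'\<in>UNIV. (if k' = k then x k' else 1) * x k' ^ count (mset ks) k')"
    by (intro prod.cong) auto
  also have "\<dots> = x k * (\<Prod>k'\<in>UNIV. x k' ^ count (mset ks) k')"
    by (simp add: prod.distrib prod.delta)
  finally show ?case using Cons by simp
qed

lemma V_integral:
  fixes ks :: "'n::finite list"
  shows "integrable (PiM UNIV (\<lambda>_::'n. NM)) (\<lambda>x. prod_list (map x ks))"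
    and "integral\<^sup>L (PiM UNIV (\<lambda>_::'n. NM)) (\<lambda>x. prod_list (map x ks)) = V ks"
proof -
  have int: "\<And>k. k \<in> UNIV \<Longrightarrow> integrable NM (\<lambda>y. y ^ count (mset ks) k)"
    by (rule integrable_std_normal_distribution_moment)
  have e: "(\<lambda>x::'n \<Rightarrow> real. prod_list (map x ks)) = (\<lambda>x. \<Prod>k\<in>UNIV. x k ^ count (mset ks) k)"
    by (rule ext, rule prod_list_count)
  show "integrable (PiM UNIV (\<lambda>_::'n. NM)) (\<lambda>x. prod_list (map x ks))"
    unfolding e using product_sigma_finite.product_integrable_prod[OF PSF, of UNIV "\<lambda>k y. y ^ count (mset ks) k"] int
    by simp
  show "integral\<^sup>L (PiM UNIV (\<lambda>_::'n. NM)) (\<lambda>x. prod_list (map x ks)) = V ks"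
    unfolding e using product_sigma_finite.product_integral_prod[OF PSF, of UNIV "\<lambda>k y. y ^ count (mset ks) k"] int
    by (simp add: V_def mom_def)
qed

lemma prod_list_expand:
  fixes M :: "'n::finite \<Rightarrow> 'n \<Rightarrow> real"
  shows "prod_list (map (\<lambda>i. \<Sum>l\<in>UNIV. M i l * x l) is)
     = (\<Sum>ks\<in>LL (length is). mp M is ks * prod_list (map x ks))"
proof (induction "is")
  case Nil
  then show ?case by simp
next
  case (Cons i "is")
  have "prod_list (map (\<lambda>i. \<Sum>l\<in>UNIV. M i l * x l) (i # is))
     = (\<Sum>l\<in>UNIV. M i l * x l) * (\<Sum>ks\<in>LL (length is). mp M is ks * prod_list (map x ks))"
    using Cons by simp
  also have "\<dots> = (\<Sum>l\<in>UNIV. \<Sum>ks\<in>LL (length is). mp M (i # is) (l # ks) * prod_list (map x (l # ks)))"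
    by (simp add: sum_distrib_left sum_distrib_right mult_ac, rule sum.swap)
  also have "\<dots> = (\<Sum>ks\<in>LL (length (i # is)). mp M (i # is) ks * prod_list (map x ks))"
    by (simp add: sum_LL_Suc)
  finally show ?case .
qed

lemma W_integral:
  fixes M :: "'n::finite \<Rightarrow> 'n \<Rightarrow> real"
  shows "integrable (PiM UNIV (\<lambda>_::'n. NM)) (\<lambda>x. prod_list (map (\<lambda>i. \<Sum>l\<in>UNIV. M i l * x l) is))"
    and "integral\<^sup>L (PiM UNIV (\<lambda>_::'n. NM)) (\<lambda>x. prod_list (map (\<lambda>i. \<Sum>l\<in>UNIV. M i l * x l) is)) = W M is"
  unfolding prod_list_expand
  by (auto simp: W_def V_integral intro!: integrable_sum integrable_mult_right)

lemma W_pair: "W M [i, j] = QM M i j"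
proof -
  have "W M [i, j] = (\<Sum>ks\<in>LL (Suc 0). M i (ks ! 0) * mp M [j] ks * V (del 0 ks))"
    by (simp add: W_Cons)
  also have "\<dots> = QM M i j"
    by (simp add: sum_LL_Suc QM_def del_def)
  finally show ?thesis .
qed



lemma int_term:
  fixes M :: "'n::finite \<Rightarrow> 'n \<Rightarrow> real"
  shows "integrable (PiM UNIV (\<lambda>_::'n. NM)) (\<lambda>x. c * prod_list (map (\<lambda>i. \<Sum>l\<in>UNIV. M i l * x l) is))"
    and "integral\<^sup>L (PiM UNIV (\<lambda>_::'n. NM)) (\<lambda>x. c * prod_list (map (\<lambda>i. \<Sum>l\<in>UNIV. M i l * x l) is)) = c * W M is"
proof -
  show "integrable (PiM UNIV (\<lambda>_::'n. NM)) (\<lambda>x. c * prod_list (map (\<lambda>i. \<Sum>l\<in>UNIV. M i l * x l) is))"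
    by (rule integrable_mult_right) (rule W_integral(1))
  show "integral\<^sup>L (PiM UNIV (\<lambda>_::'n. NM)) (\<lambda>x. c * prod_list (map (\<lambda>i. \<Sum>l\<in>UNIV. M i l * x l) is)) = c * W M is"
    by (simp add: W_integral(2))
qed

lemma int_dsum:
  fixes M :: "'n::finite \<Rightarrow> 'n \<Rightarrow> real" and c :: "'a \<Rightarrow> 'b \<Rightarrow> real" and e :: "'a \<Rightarrow> 'b \<Rightarrow> 'n list"
  shows "integrable (PiM UNIV (\<lambda>_::'n. NM)) (\<lambda>x. \<Sum>i\<in>A. \<Sum>j\<in>B. c i j * prod_list (map (\<lambda>i. \<Sum>l\<in>UNIV. M i l * x l) (e i j)))"
    and "integral\<^sup>L (PiM UNIV (\<lambda>_::'n. NM)) (\<lambda>x. \<Sum>i\<in>A. \<Sum>j\<in>B. c i j * prod_list (map (\<lambda>i. \<Sum>l\<in>UNIV. M i l * x l) (e i j)))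
       = (\<Sum>i\<in>A. \<Sum>j\<in>B. c i j * W M (e i j))"
proof -
  show "integrable (PiM UNIV (\<lambda>_::'n. NM)) (\<lambda>x. \<Sum>i\<in>A. \<Sum>j\<in>B. c i j * prod_list (map (\<lambda>i. \<Sum>l\<in>UNIV. M i l * x l) (e i j)))"
    by (intro Bochner_Integration.integrable_sum int_term(1))
  show "integral\<^sup>L (PiM UNIV (\<lambda>_::'n. NM)) (\<lambda>x. \<Sum>i\<in>A. \<Sum>j\<in>B. c i j * prod_list (map (\<lambda>i. \<Sum>l\<in>UNIV. M i l * x l) (e i j)))
       = (\<Sum>i\<in>A. \<Sum>j\<in>B. c i j * W M (e i j))"
  proof -
    have i1: "integrable (PiM UNIV (\<lambda>_::'n. NM)) (\<lambda>x. \<Sum>j\<in>B. c i j * prod_list (map (\<lambda>i. \<Sum>l\<in>UNIV. M i l * x l) (e i j)))" for i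
      by (intro Bochner_Integration.integrable_sum int_term(1))
    have "integral\<^sup>L (PiM UNIV (\<lambda>_::'n. NM)) (\<lambda>x. \<Sum>i\<in>A. \<Sum>j\<in>B. c i j * prod_list (map (\<lambda>i. \<Sum>l\<in>UNIV. M i l * x l) (e i j)))
       = (\<Sum>i\<in>A. integral\<^sup>L (PiM UNIV (\<lambda>_::'n. NM)) (\<lambda>x. \<Sum>j\<in>B. c i j * prod_list (map (\<lambda>i. \<Sum>l\<in>UNIV. M i l * x l) (e i j))))"
      by (rule Bochner_Integration.integral_sum) (rule i1)
    also have "\<dots> = (\<Sum>i\<in>A. \<Sum>j\<in>B. c i j * W M (e i j))"
    proof (rule sum.cong[OF refl])
      fix i
      have "integral\<^sup>L (PiM UNIV (\<lambda>_::'n. NM)) (\<lambda>x. \<Sum>j\<in>B. c i j * prod_list (map (\<lambda>i. \<Sum>l\<in>UNIV. M i l * x l) (e i j)))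
         = (\<Sum>j\<in>B. integral\<^sup>L (PiM UNIV (\<lambda>_::'n. NM)) (\<lambda>x. c i j * prod_list (map (\<lambda>i. \<Sum>l\<in>UNIV. M i l * x l) (e i j))))"
        by (rule Bochner_Integration.integral_sum) (rule int_term(1))
      also have "\<dots> = (\<Sum>j\<in>B. c i j * W M (e i j))"
        by (simp only: int_term(2))
      finally show "integral\<^sup>L (PiM UNIV (\<lambda>_::'n. NM)) (\<lambda>x. \<Sum>j\<in>B. c i j * prod_list (map (\<lambda>i. \<Sum>l\<in>UNIV. M i l * x l) (e i j)))
         = (\<Sum>j\<in>B. c i j * W M (e i j))" .
    qed
    finally show ?thesis .
  qed
qed

lemma key_pos:
  fixes M :: "'n::finite \<Rightarrow> 'n \<Rightarrow> real" and D :: "'n list \<Rightarrow> real" and a :: "real^'n"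
    and H :: "real^'n \<Rightarrow> real" and Q :: "real^'n^'n"
  assumes poly: "\<forall>y. (\<Sum>is\<in>LL N. D is * prod_list (map (\<lambda>i. y $ i) is)) = H y"
    and nonneg: "\<forall>y. (a \<bullet> y) * H y \<ge> 0"
    and pos: "\<forall>y. a \<bullet> y \<noteq> 0 \<longrightarrow> (a \<bullet> y) * H y > 0"
    and QQ: "\<forall>i j. Q $ i $ j = QM M i j"
    and apos: "a \<bullet> (Q *v a) > 0"
  shows "(\<Sum>i0\<in>UNIV. a $ i0 * (\<Sum>is\<in>LL N. D is * W M (i0 # is))) > 0"
proof (rule ccontr)
  let ?MU = "PiM UNIV (\<lambda>_::'n. NM)"
  define Zc where "Zc x i = (\<Sum>l\<in>UNIV. M i l * x l)" for x :: "'n \<Rightarrow> real" and i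
  define Zv where "Zv x = (\<chi> i. Zc x i)" for x
  define g where "g x = (a \<bullet> Zv x) * H (Zv x)" for x
  define I where "I = (\<Sum>i0\<in>UNIV. a $ i0 * (\<Sum>is\<in>LL N. D is * W M (i0 # is)))"
  assume "\<not> (\<Sum>i0\<in>UNIV. a $ i0 * (\<Sum>is\<in>LL N. D is * W M (i0 # is))) > 0"
  then have Ile: "I \<le> 0" by (simp add: I_def)
  have aZ: "a \<bullet> Zv x = (\<Sum>i0\<in>UNIV. a $ i0 * Zc x i0)" for x
    by (simp add: inner_vec_def Zv_def)
  have g_eq: "g = (\<lambda>x. \<Sum>i0\<in>UNIV. \<Sum>is\<in>LL N. (a $ i0 * D is) * prod_list (map (Zc x) (i0 # is)))"
  proof
    fix x
    have hz: "H (Zv x) = (\<Sum>is\<in>LL N. D is * prod_list (map (Zc x) is))"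
    proof -
      have e: "(($) (\<chi> i. Zc x i)) = Zc x" by (simp add: fun_eq_iff)
      show ?thesis using poly[rule_format, of "Zv x"] by (simp add: Zv_def e)
    qed
    show "g x = (\<Sum>i0\<in>UNIV. \<Sum>is\<in>LL N. (a $ i0 * D is) * prod_list (map (Zc x) (i0 # is)))"
      unfolding g_def aZ hz by (simp add: sum_distrib_left sum_distrib_right mult_ac, rule sum.swap)
  qed
  have Zc_eq: "Zc x = (\<lambda>i. \<Sum>l\<in>UNIV. M i l * x l)" for x by (simp add: Zc_def fun_eq_iff)
  have g_int: "integrable ?MU g"
    unfolding g_eq Zc_eq by (rule int_dsum(1))
  have g_integral: "integral\<^sup>L ?MU g = I"
  proof -
    have "integral\<^sup>L ?MU g = (\<Sum>i0\<in>UNIV. \<Sum>is\<in>LL N. (a $ i0 * D is) * W M (i0 # is))"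
      unfolding g_eq Zc_eq by (rule int_dsum(2))
    then show ?thesis by (simp add: I_def sum_distrib_left mult_ac)
  qed
  have g_nn: "g x \<ge> 0" for x using nonneg by (simp add: g_def)
  have "integral\<^sup>L ?MU g \<ge> 0" using g_nn by (simp add: integral_nonneg)
  then have "integral\<^sup>L ?MU g = 0" using Ile g_integral by simp
  then have AEg: "AE x in ?MU. g x = 0"
    using integral_nonneg_eq_0_iff_AE[OF g_int] g_nn by simp
  define h where "h x = (a \<bullet> Zv x)^2" for x
  have h_eq: "h = (\<lambda>x. \<Sum>i\<in>UNIV. \<Sum>j\<in>UNIV. (a $ i * a $ j) * prod_list (map (Zc x) [i, j]))"
    by (simp add: fun_eq_iff h_def aZ power2_eq_square sum_distrib_left sum_distrib_right mult_ac)
  have h_int: "integrable ?MU h"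
    unfolding h_eq Zc_eq by (rule int_dsum(1))
  have h_integral: "integral\<^sup>L ?MU h = a \<bullet> (Q *v a)"
  proof -
    have "integral\<^sup>L ?MU h = (\<Sum>i\<in>UNIV. \<Sum>j\<in>UNIV. (a $ i * a $ j) * W M [i, j])"
      unfolding h_eq Zc_eq by (rule int_dsum(2))
    also have "\<dots> = a \<bullet> (Q *v a)"
      by (simp add: W_pair QQ inner_vec_def matrix_vector_mult_def sum_distrib_left mult_ac)
    finally show ?thesis .
  qed
  have "AE x in ?MU. h x = 0"
    using AEg
  proof (rule eventually_mono)
    fix x assume "g x = 0"
    then have "a \<bullet> Zv x = 0" using pos by (auto simp: g_def)
    then show "h x = 0" by (simp add: h_def)
  qed
  then have "integral\<^sup>L ?MU h = 0"
    using integral_nonneg_eq_0_iff_AE[OF h_int] by (simp add: h_def)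
  then show False using h_integral apos by simp
qed



lemma div_eq_imp: "(x::real) / c = t \<Longrightarrow> c \<noteq> 0 \<Longrightarrow> x = c * t"
  by (simp add: field_simps)

theorem proposition4:
  fixes q :: nat and f :: "real^'n \<Rightarrow> real" and th a :: "real^'n"
    and R :: "nat \<Rightarrow> real^'n^'n"
  assumes q_even: "even q" and q_ge: "q \<ge> 2" and d_ge: "CARD('n) \<ge> q"
    and density_nonneg: "\<forall>x. f x \<ge> 0"
    and density_int: "(f has_integral 1) UNIV"
    and mode: "\<forall>x. f x \<le> f th"
    and hess_inv: "invertible (hessian f th)"
    and smooth: "C_k (q + 1) f"
    and taylor: "\<forall>y. taylor_term (q + 1) f th y
                   = (a \<bullet> y) * (\<Prod>i = 1..q div 2. (1/2) * (y \<bullet> (R i *v y)))"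
    and a_nz: "a \<noteq> 0"
    and R_pd: "\<forall>i\<in>{1..q div 2}. pos_def_mat (R i)"
  shows "\<forall>Q. pos_def_mat Q \<longrightarrow> grad ((quad_op Q ^^ (q div 2)) f) th \<noteq> 0"
proof (intro allI impI)
  fix Q :: "real^'n^'n" assume Qpd: "pos_def_mat Q"
  define m where "m = q div 2"
  have q2: "q = 2 * m" using q_even by (simp add: m_def)
  have sm: "C_k (2 * m + 1) f" using smooth q2 by simp
  obtain M :: "'n \<Rightarrow> 'n \<Rightarrow> real" where MQ: "\<forall>i j. Q $ i $ j = (\<Sum>l\<in>UNIV. M i l * M j l)" using cholesky[OF Qpd] by blast
  have QQ: "\<forall>i j. Q $ i $ j = QM M i j" using MQ by (simp add: QM_def)
  define D where "D is = iter_partial is f th" for "is"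
  have Dsym: "\<And>xs ys. mset xs = mset ys \<Longrightarrow> length xs = 2 * m + 1 \<Longrightarrow> D xs = D ys"
    unfolding D_def using ip_perm[OF sm] by simp
  define T where "T y = (a \<bullet> y) * (\<Prod>i = 1..m. (1/2) * (y \<bullet> (R i *v y)))" for y
  have poly: "\<forall>y. (\<Sum>is\<in>LL (2 * m + 1). D is * prod_list (map (\<lambda>i. y $ i) is)) = fact (2 * m + 1) * T y"
  proof
    fix y :: "real^'n"
    have qm: "q div 2 = m" by (simp add: m_def)
    have q1: "q + 1 = 2 * m + 1" using q2 by simp
    have t1: "taylor_term (2 * m + 1) f th y = T y"
      using taylor[rule_format, of y] unfolding qm q1 T_def .
    have t2: "(deriv ^^ (2 * m + 1)) (\<lambda>t. f (th + t *\<^sub>R y)) 0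
        = (\<Sum>is\<in>LL (2 * m + 1). D is * prod_list (map (\<lambda>i. y $ i) is))"
      using chain_iter[OF sm order_refl, of th y] by (simp add: D_def)
    show "(\<Sum>is\<in>LL (2 * m + 1). D is * prod_list (map (\<lambda>i. y $ i) is)) = fact (2 * m + 1) * T y"
    proof (rule div_eq_imp)
      show "(\<Sum>is\<in>LL (2 * m + 1). D is * prod_list (map (\<lambda>i. y $ i) is)) / fact (2 * m + 1) = T y"
        using t1[unfolded taylor_term_def t2] .
      show "(fact (2 * m + 1) :: real) \<noteq> 0" by simp
    qed
  qed
  have prodpos: "(\<Prod>i = 1..m. (1/2) * (y \<bullet> (R i *v y))) > 0" if "y \<noteq> 0" for y
  proof (rule prod_pos)
    fix i assume "i \<in> {1..m}"
    then have "pos_def_mat (R i)" using R_pd by (simp add: m_def)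
    then show "0 < (1/2) * (y \<bullet> (R i *v y))" using that by (simp add: pos_def_mat_def)
  qed
  have Texp: "(a \<bullet> y) * (fact (2 * m + 1) * T y) = fact (2 * m + 1) * (a \<bullet> y)^2 * (\<Prod>i = 1..m. (1/2) * (y \<bullet> (R i *v y)))" for y
    by (simp add: T_def power2_eq_square mult_ac)
  have nonneg: "\<forall>y. (a \<bullet> y) * (fact (2 * m + 1) * T y) \<ge> 0"
  proof
    fix y :: "real^'n"
    show "(a \<bullet> y) * (fact (2 * m + 1) * T y) \<ge> 0"
    proof (cases "y = 0")
      case True then show ?thesis by (simp add: T_def)
    next
      case False then show ?thesis unfolding Texp using prodpos[OF False] by simp
    qed
  qed
  have pos: "\<forall>y. a \<bullet> y \<noteq> 0 \<longrightarrow> (a \<bullet> y) * (fact (2 * m + 1) * T y) > 0"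
  proof (intro allI impI)
    fix y :: "real^'n" assume ay: "a \<bullet> y \<noteq> 0"
    then have "y \<noteq> 0" by auto
    then show "(a \<bullet> y) * (fact (2 * m + 1) * T y) > 0" unfolding Texp using prodpos ay by simp
  qed
  have apos: "a \<bullet> (Q *v a) > 0" using Qpd a_nz by (simp add: pos_def_mat_def)
  have Ipos: "(\<Sum>i0\<in>UNIV. a $ i0 * (\<Sum>is\<in>LL (2 * m + 1). D is * W M (i0 # is))) > 0"
    by (rule key_pos[OF poly nonneg pos QQ apos])
  show "grad ((quad_op Q ^^ (q div 2)) f) th \<noteq> 0"
  proof
    assume G0: "grad ((quad_op Q ^^ (q div 2)) f) th = 0"
    have Gl: "(\<Sum>is\<in>LL (2 * m). cq Q is * D (l # is)) = 0" for l
      using grad_quad[OF sm, of Q th l] G0 by (simp add: m_def D_def)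
    have wz: "(\<Sum>js\<in>LL (2 * m). W M js * D ([l] @ js)) = 0" for l
    proof -
      have "(\<Sum>js\<in>LL (2 * m). W M js * D ([l] @ js)) = cc m * (\<Sum>js\<in>LL (2 * m). cq Q js * D ([l] @ js))"
        by (rule wick[OF Dsym]) (use QQ in auto)
      then show ?thesis using Gl[of l] by simp
    qed
    have "(\<Sum>i0\<in>UNIV. a $ i0 * (\<Sum>is\<in>LL (2 * m + 1). D is * W M (i0 # is)))
       = (\<Sum>i0\<in>UNIV. a $ i0 * (\<Sum>is\<in>LL (2 * m + 1). W M (i0 # is) * D is))"
      by (simp add: mult.commute)
    also have "\<dots> = (\<Sum>i0\<in>UNIV. a $ i0 * (real (2 * m + 1) *
        (\<Sum>i'\<in>UNIV. \<Sum>js\<in>LL (2 * m + 1 - 1). QM M i0 i' * W M js * D (i' # js))))"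
    proof (rule sum.cong[OF refl])
      fix i0
      have "(\<Sum>is\<in>LL (2 * m + 1). W M (i0 # is) * D is)
         = real (2 * m + 1) * (\<Sum>i'\<in>UNIV. \<Sum>js\<in>LL (2 * m + 1 - 1). QM M i0 i' * W M js * D (i' # js))"
        by (rule WS_sym) (rule Dsym)
      then show "a $ i0 * (\<Sum>is\<in>LL (2 * m + 1). W M (i0 # is) * D is)
         = a $ i0 * (real (2 * m + 1) * (\<Sum>i'\<in>UNIV. \<Sum>js\<in>LL (2 * m + 1 - 1). QM M i0 i' * W M js * D (i' # js)))"
        by simp
    qed
    also have "\<dots> = 0"
    proof -
      have "(\<Sum>js\<in>LL (2 * m + 1 - 1). QM M i0 i' * W M js * D (i' # js)) = 0" for i0 i'
      proof -
        have "(\<Sum>js\<in>LL (2 * m + 1 - 1). QM M i0 i' * W M js * D (i' # js))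
            = QM M i0 i' * (\<Sum>js\<in>LL (2 * m). W M js * D ([i'] @ js))"
          by (simp add: sum_distrib_left mult.assoc)
        then show ?thesis using wz[of i'] by simp
      qed
      then show ?thesis by simp
    qed
    finally show False using Ipos by simp
  qed
qed


end
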